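(* Fix reals $a<b$, $S=T\cap[a,b]$, a natural number $m\ge1$, an integer $\ell\ge1$ and reals $a=u_1<u_2<\cdots<u_\ell<u_{\ell+1}=b$. Let $\mathcal A$ be any set of constraints on real tuples $(c,(x_i^{(k)})_{1\le i\le \ell,\,0\le k\le 2m-1})$ such that for every $S$-code $C$ the tuple $(|C|,(x_i^{(k)}(C)))$ satisfies $\mathcal A$. Let $c^*(m)$ be the supremum of $c$ over all real $c,z,(x_i^{(k)})$ satisfying: (5) $\begin{pmatrix}1&c\\ c&z\end{pmatrix}\succeq0$ and $z=c+x_1^{(0)}+\cdots+x_\ell^{(0)}$; (6) $c+\sum_{d=0}^k p_{kd}\sum_{i=1}^\ell x_i^{(d)}\ge0$ for $k=1,\ldots,2m-1$; (7) $H_m(x_i^{(0)},x_i^{(1)},\ldots,x_i^{(2m-1)},[u_i,u_{i+1}])\succeq0$ for $i=1,\ldots,\ell$; (8) the constraints $\mathcal A$. Then $A(\mathbf M,S)\le c^*(m)$.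
   Context: $\mathbf M$ is a 2-point-homogeneous space with its associated real function $\tau(x,y)$, $\tau_0:=\tau(x,x)$, and $T=\{\tau(x,y):x,y\in\mathbf M\}$. Its zonal spherical functions $\Phi_k$ are assumed to be real polynomials of degree $k$, $\Phi_k(t)=\sum_{d=0}^k p_{kd}t^d$, with $\Phi_k(\tau_0)=1$, such that for every $k\ge0$ and every finite $\{x_1,\ldots,x_N\}\subset\mathbf M$ the matrix $(\Phi_k(\tau(x_i,x_j)))_{i,j}$ is positive semidefinite. An $S$-code is a finite $C\subset\mathbf M$ with $\tau(x,y)\in S$ for all distinct $x,y\in C$; $A(\mathbf M,S)$ is the largest cardinality of an $S$-code. For an $S$-code $C=\{z_1,\ldots,z_c\}$, $x_i^{(k)}(C):=\sum \tau(z_p,z_q)^k$, the sum over ordered pairs $(p,q)$ with $p\ne q$ and $\tau(z_p,z_q)\in[u_i,u_{i+1})$ for $i<\ell$, resp. $\tau(z_p,z_q)\in[u_\ell,b]$ for $i=\ell$ (with $\tau^0:=1$). For reals $s_0,\ldots,s_{2m-1}$ and $\alpha<\beta$: $R_m=(s_{i+j-2})_{i,j=1}^m$, $F_m^+(\alpha)=(s_{i+j-1}-\alpha s_{i+j-2})$, $F_m^-(\beta)=(\beta s_{i+j-2}-s_{i+j-1})$, $H_m(s_0,\ldots,s_{2m-1},[\alpha,\beta])=\operatorname{diag}(R_m,F_m^+(\alpha),F_m^-(\beta))$. *)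

theory Defs
  imports Complex_Main "HOL-Library.Extended_Real"
begin

definition psd_mat :: "nat \<Rightarrow> (nat \<Rightarrow> nat \<Rightarrow> real) \<Rightarrow> bool" where
  "psd_mat n A \<longleftrightarrow> (\<forall>i<n. \<forall>j<n. A i j = A j i) \<and>
     (\<forall>v :: nat \<Rightarrow> real. 0 \<le> (\<Sum>i<n. \<Sum>j<n. v i * A i j * v j))"

definition Phi :: "(nat \<Rightarrow> nat \<Rightarrow> real) \<Rightarrow> nat \<Rightarrow> real \<Rightarrow> real" where
  "Phi p k t = (\<Sum>d\<le>k. p k d * t ^ d)"

definition tau_values :: "('a \<Rightarrow> 'a \<Rightarrow> real) \<Rightarrow> real set" where
  "tau_values \<tau> = {\<tau> x y | x y. True}"

definition is_code :: "('a \<Rightarrow> 'a \<Rightarrow> real) \<Rightarrow> real set \<Rightarrow> 'a set \<Rightarrow> bool" where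
  "is_code \<tau> S C \<longleftrightarrow> finite C \<and> (\<forall>x\<in>C. \<forall>y\<in>C. x \<noteq> y \<longrightarrow> \<tau> x y \<in> S)"

definition A_code :: "('a \<Rightarrow> 'a \<Rightarrow> real) \<Rightarrow> real set \<Rightarrow> ereal" where
  "A_code \<tau> S = Sup {ereal (real (card C)) | C. is_code \<tau> S C}"

definition interval_i :: "(nat \<Rightarrow> real) \<Rightarrow> nat \<Rightarrow> nat \<Rightarrow> real set" where
  "interval_i u l i = (if i < l then {u i..<u (Suc i)} else {u l..u (Suc l)})"

definition xcode :: "('a \<Rightarrow> 'a \<Rightarrow> real) \<Rightarrow> (nat \<Rightarrow> real) \<Rightarrow> nat \<Rightarrow> 'a set \<Rightarrow> nat \<Rightarrow> nat \<Rightarrow> real" where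
  "xcode \<tau> u l C i k =
     (\<Sum>(y, z) \<in> {(y, z). y \<in> C \<and> z \<in> C \<and> y \<noteq> z \<and> \<tau> y z \<in> interval_i u l i}. \<tau> y z ^ k)"

definition restr_tuple :: "nat \<Rightarrow> nat \<Rightarrow> (nat \<Rightarrow> nat \<Rightarrow> real) \<Rightarrow> nat \<Rightarrow> nat \<Rightarrow> real" where
  "restr_tuple l m x = (\<lambda>i k. if 1 \<le> i \<and> i \<le> l \<and> k < 2 * m then x i k else 0)"

text \<open>Hankel-type block matrix H_m(s_0,...,s_{2m-1},[alpha,beta]) = diag(R_m, F_m^+, F_m^-),
  0-indexed, of size 3m.\<close>
definition H_mat :: "nat \<Rightarrow> (nat \<Rightarrow> real) \<Rightarrow> real \<Rightarrow> real \<Rightarrow> nat \<Rightarrow> nat \<Rightarrow> real" where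
  "H_mat m s \<alpha> \<beta> i j =
     (if i < m \<and> j < m then s (i + j)
      else if m \<le> i \<and> i < 2 * m \<and> m \<le> j \<and> j < 2 * m then
        s ((i - m) + (j - m) + 1) - \<alpha> * s ((i - m) + (j - m))
      else if 2 * m \<le> i \<and> i < 3 * m \<and> 2 * m \<le> j \<and> j < 3 * m then
        \<beta> * s ((i - 2 * m) + (j - 2 * m)) - s ((i - 2 * m) + (j - 2 * m) + 1)
      else 0)"

definition feasible ::
  "(nat \<Rightarrow> nat \<Rightarrow> real) \<Rightarrow> (nat \<Rightarrow> real) \<Rightarrow> nat \<Rightarrow> nat \<Rightarrow>
   (real \<Rightarrow> (nat \<Rightarrow> nat \<Rightarrow> real) \<Rightarrow> bool) \<Rightarrow> real \<Rightarrow> real \<Rightarrow> (nat \<Rightarrow> nat \<Rightarrow> real) \<Rightarrow> bool" where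
  "feasible p u l m Acon c z x \<longleftrightarrow>
     psd_mat 2 (\<lambda>i j. if i = 0 \<and> j = 0 then 1 else if i = 1 \<and> j = 1 then z else c) \<and>
     z = c + (\<Sum>i=1..l. x i 0) \<and>
     (\<forall>k\<in>{1..2 * m - 1}. 0 \<le> c + (\<Sum>d=0..k. p k d * (\<Sum>i=1..l. x i d))) \<and>
     (\<forall>i\<in>{1..l}. psd_mat (3 * m) (H_mat m (x i) (u i) (u (Suc i)))) \<and>
     Acon c (restr_tuple l m x)"

definition c_star ::
  "(nat \<Rightarrow> nat \<Rightarrow> real) \<Rightarrow> (nat \<Rightarrow> real) \<Rightarrow> nat \<Rightarrow> nat \<Rightarrow>
   (real \<Rightarrow> (nat \<Rightarrow> nat \<Rightarrow> real) \<Rightarrow> bool) \<Rightarrow> ereal" where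
  "c_star p u l m Acon = Sup {ereal c | c. \<exists>z x. feasible p u l m Acon c z x}"

end

theory Submission
  imports Defs
begin

lemma psd_cong:
  assumes "\<And>i j. i < n \<Longrightarrow> j < n \<Longrightarrow> A i j = B i j" and "psd_mat n B"
  shows "psd_mat n A"
proof -
  have "(\<Sum>i<n. \<Sum>j<n. v i * A i j * v j) = (\<Sum>i<n. \<Sum>j<n. v i * B i j * v j)" for v
    using assms(1) by (intro sum.cong) auto
  then show ?thesis using assms unfolding psd_mat_def by auto
qed

lemma psd_rank1:
  assumes "0 \<le> w"
  shows "psd_mat n (\<lambda>i j. w * f i * f j)"
proof -
  have "(\<Sum>i<n. \<Sum>j<n. v i * (w * f i * f j) * v j) = w * (\<Sum>i<n. v i * f i)^2" for v
    by (simp add: power2_eq_square sum_product sum_distrib_left mult_ac)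
  then show ?thesis using assms unfolding psd_mat_def by auto
qed

lemma psd_add:
  assumes "psd_mat n A" "psd_mat n B"
  shows "psd_mat n (\<lambda>i j. A i j + B i j)"
proof -
  have "(\<Sum>i<n. \<Sum>j<n. v i * (A i j + B i j) * v j) =
     (\<Sum>i<n. \<Sum>j<n. v i * A i j * v j) + (\<Sum>i<n. \<Sum>j<n. v i * B i j * v j)" for v
    by (simp add: algebra_simps sum.distrib)
  then show ?thesis using assms unfolding psd_mat_def by (auto intro: add_nonneg_nonneg)
qed

lemma psd_sum:
  assumes "finite Q" "\<And>q. q \<in> Q \<Longrightarrow> psd_mat n (A q)"
  shows "psd_mat n (\<lambda>i j. \<Sum>q\<in>Q. A q i j)"
  using assms
proof (induction Q rule: finite_induct)
  case empty
  then show ?case unfolding psd_mat_def by simp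
next
  case (insert x F)
  then show ?case using psd_add[of n "A x" "\<lambda>i j. \<Sum>q\<in>F. A q i j"] by simp
qed

lemma H_lin:
  "H_mat m (\<lambda>k. \<Sum>q\<in>Q. F q k) \<alpha> \<beta> i j = (\<Sum>q\<in>Q. H_mat m (F q) \<alpha> \<beta> i j)"
  unfolding H_mat_def
  apply (cases "i < m \<and> j < m"; cases "m \<le> i \<and> i < 2 * m \<and> m \<le> j \<and> j < 2 * m";
      cases "2 * m \<le> i \<and> i < 3 * m \<and> 2 * m \<le> j \<and> j < 3 * m")
       by (simp only: if_True if_False, simp add: sum_distrib_left sum_subtractf)+

lemma H_single:
  fixes t :: real
  assumes "\<alpha> \<le> t" "t \<le> \<beta>"
  shows "psd_mat (3 * m) (H_mat m (\<lambda>k. t ^ k) \<alpha> \<beta>)"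
proof -
  define g0 where "g0 i = (if i < m then t ^ i else 0)" for i
  define g1 where "g1 i = (if m \<le> i \<and> i < 2 * m then t ^ (i - m) else 0)" for i
  define g2 where "g2 i = (if 2 * m \<le> i \<and> i < 3 * m then t ^ (i - 2 * m) else 0)" for i
  have eq: "H_mat m (\<lambda>k. t ^ k) \<alpha> \<beta> i j =
     (1 * g0 i * g0 j + (t - \<alpha>) * g1 i * g1 j) + (\<beta> - t) * g2 i * g2 j" for i j
  proof -
    have p1: "t ^ (i - m + (j - m)) = t ^ (i - m) * t ^ (j - m)"
      "t ^ (i - m + (j - m) + 1) = t * (t ^ (i - m) * t ^ (j - m))"
      "t ^ (i - 2 * m + (j - 2 * m)) = t ^ (i - 2 * m) * t ^ (j - 2 * m)"
      "t ^ (i - 2 * m + (j - 2 * m) + 1) = t * (t ^ (i - 2 * m) * t ^ (j - 2 * m))"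
      "t ^ (i + j) = t ^ i * t ^ j"
      by (simp_all only: power_add power_Suc Suc_eq_plus1[symmetric])
    show ?thesis
      unfolding H_mat_def g0_def g1_def g2_def
      by (cases "i < m \<and> j < m"; cases "m \<le> i \<and> i < 2 * m \<and> m \<le> j \<and> j < 2 * m";
        cases "2 * m \<le> i \<and> i < 3 * m \<and> 2 * m \<le> j \<and> j < 3 * m")
        (simp_all only: p1 if_True if_False, auto simp: algebra_simps)
  qed
  show ?thesis
    apply (rule psd_cong[OF _ psd_add[OF psd_add]])
       apply (rule eq)
      apply (rule psd_rank1; simp)
     apply (rule psd_rank1; use assms in simp)
    apply (rule psd_rank1; use assms in simp)
    done
qed


lemma u_strict:
  fixes u :: "nat \<Rightarrow> real" and i j l :: nat
  assumes "\<forall>i\<in>{1..l}. u i < u (i + 1)" "1 \<le> i"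
  shows "i < j \<Longrightarrow> j \<le> l + 1 \<Longrightarrow> u i < (u j :: real)"
proof (induction j)
  case 0 then show ?case by simp
next
  case (Suc j)
  show ?case
  proof (cases "i = j")
    case True then show ?thesis using assms(1,2) Suc.prems by auto
  next
    case False
    then have "u i < u j" using Suc by auto
    also have "u j < u (Suc j)" using assms(1,2) Suc.prems False by auto
    finally show ?thesis .
  qed
qed

lemma interval_unique:
  fixes u :: "nat \<Rightarrow> real" and l :: nat
  assumes um: "\<forall>i\<in>{1..l}. u i < u (i + 1)" and l: "1 \<le> l"
    and t: "u 1 \<le> t" "t \<le> u (l + 1)"
  shows "\<exists>!i. i \<in> {1..l} \<and> t \<in> interval_i u l i"
proof -
  define K where "K = {i\<in>{1..l}. u i \<le> t}"
  have Kf: "finite K" and Kne: "1 \<in> K" using t l by (auto simp: K_def)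
  define i0 where "i0 = Max K"
  have i0K: "i0 \<in> K" using Kf Kne i0_def Max_in by blast
  have i0max: "j \<in> K \<Longrightarrow> j \<le> i0" for j using Kf i0_def by simp
  have ex: "i0 \<in> {1..l} \<and> t \<in> interval_i u l i0"
  proof (cases "i0 < l")
    case True
    then have "Suc i0 \<notin> K" using i0max by fastforce
    then have "t < u (Suc i0)" using True i0K by (auto simp: K_def)
    then show ?thesis using True i0K by (auto simp: K_def interval_i_def)
  next
    case False
    then have "i0 = l" using i0K by (auto simp: K_def)
    then show ?thesis using i0K t by (auto simp: K_def interval_i_def)
  qed
  have uni: "i = j" if "i \<in> {1..l}" "t \<in> interval_i u l i" "j \<in> {1..l}" "t \<in> interval_i u l j" for i j
  proof (rule ccontr)
    assume "i \<noteq> j"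
    then consider "i < j" | "j < i" by linarith
    then show False
    proof cases
      case 1
      then have "i < l" using that by auto
      then have "t < u (Suc i)" using that by (auto simp: interval_i_def)
      moreover have "u (Suc i) \<le> u j"
        using u_strict[OF um, of "Suc i" j] 1 that by (cases "Suc i = j") auto
      moreover have "u j \<le> t" using that by (auto simp: interval_i_def split: if_splits)
      ultimately show False by simp
    next
      case 2
      then have "j < l" using that by auto
      then have "t < u (Suc j)" using that by (auto simp: interval_i_def)
      moreover have "u (Suc j) \<le> u i"
        using u_strict[OF um, of "Suc j" i] 2 that by (cases "Suc j = i") auto
      moreover have "u i \<le> t" using that by (auto simp: interval_i_def split: if_splits)
      ultimately show False by simp
    qed
  qed
  show ?thesis using ex uni by blast
qed

lemma part_sum:
  fixes u :: "nat \<Rightarrow> real" and l :: nat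
  assumes um: "\<forall>i\<in>{1..l}. u i < u (i + 1)" and l: "1 \<le> l"
    and t: "u 1 \<le> t" "t \<le> u (l + 1)"
  shows "(\<Sum>i=1..l. if t \<in> interval_i u l i then f else 0) = (f :: real)"
proof -
  obtain i0 where i0: "i0 \<in> {1..l}" "t \<in> interval_i u l i0"
    and un: "\<And>j. j \<in> {1..l} \<Longrightarrow> t \<in> interval_i u l j \<Longrightarrow> j = i0"
  proof -
    from interval_unique[OF um l t] obtain i0 where "i0 \<in> {1..l} \<and> t \<in> interval_i u l i0"
      and "\<forall>j. j \<in> {1..l} \<and> t \<in> interval_i u l j \<longrightarrow> j = i0"
      by (metis (no_types, lifting) ex1E)
    then show ?thesis using that by blast
  qed
  have "(\<Sum>i=1..l. if t \<in> interval_i u l i then f else 0) = (\<Sum>i=1..l. if i = i0 then f else 0)"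
  proof (rule sum.cong)
    fix i assume "i \<in> {1..l}"
    then show "(if t \<in> interval_i u l i then f else 0) = (if i = i0 then f else 0)"
    proof (cases "i = i0")
      case True then show ?thesis using i0(2) by simp
    next
      case False
      then have "t \<notin> interval_i u l i" using un[of i] \<open>i \<in> {1..l}\<close> by blast
      then show ?thesis using False by simp
    qed
  qed simp
  also have "\<dots> = f" using i0 by simp
  finally show ?thesis .
qed

lemma interval_sub:
  assumes "i \<in> {1..l}"
  shows "interval_i u l i \<subseteq> {u i..u (Suc i)}"
  using assms by (auto simp: interval_i_def)

lemma xcode_alt:
  assumes "finite C"
  shows "xcode \<tau> u l C i k =
    (\<Sum>q\<in>{q \<in> Sigma C (\<lambda>y. C - {y}). case_prod \<tau> q \<in> interval_i u l i}. (case_prod \<tau> q) ^ k)"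
proof -
  have "{(y, z). y \<in> C \<and> z \<in> C \<and> y \<noteq> z \<and> \<tau> y z \<in> interval_i u l i}
      = {q \<in> Sigma C (\<lambda>y. C - {y}). case_prod \<tau> q \<in> interval_i u l i}" by auto
  then show ?thesis unfolding xcode_def by (intro sum.cong) auto
qed

lemma xcode_alt2:
  assumes "finite C"
  shows "xcode \<tau> u l C i k =
    (\<Sum>q\<in>Sigma C (\<lambda>y. C - {y}). if case_prod \<tau> q \<in> interval_i u l i then (case_prod \<tau> q) ^ k else 0)"
  unfolding xcode_alt[OF assms] using assms by (intro sum.inter_filter) auto


theorem theorem6p1:
  fixes \<tau> :: "'a \<Rightarrow> 'a \<Rightarrow> real" and \<tau>0 :: real
    and p :: "nat \<Rightarrow> nat \<Rightarrow> real"
    and a b :: real and m l :: nat and u :: "nat \<Rightarrow> real"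
    and Acon :: "real \<Rightarrow> (nat \<Rightarrow> nat \<Rightarrow> real) \<Rightarrow> bool"
  assumes tau0: "\<forall>x. \<tau> x x = \<tau>0"
    and deg: "\<forall>k. p k k \<noteq> 0"
    and norm: "\<forall>k. Phi p k \<tau>0 = 1"
    and pd: "\<forall>k N (x :: nat \<Rightarrow> 'a). inj_on x {..<N} \<longrightarrow>
               psd_mat N (\<lambda>i j. Phi p k (\<tau> (x i) (x j)))"
    and ab: "a < b" and m: "1 \<le> m" and l: "1 \<le> l"
    and u1: "u 1 = a" and ul: "u (l + 1) = b"
    and umono: "\<forall>i\<in>{1..l}. u i < u (i + 1)"
    and Acodes: "\<forall>C. is_code \<tau> (tau_values \<tau> \<inter> {a..b}) C \<longrightarrow>
               Acon (real (card C)) (restr_tuple l m (xcode \<tau> u l C))"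
  shows "A_code \<tau> (tau_values \<tau> \<inter> {a..b}) \<le> c_star p u l m Acon"
proof -
  let ?S = "tau_values \<tau> \<inter> {a..b}"
  have key: "ereal (real (card C)) \<le> c_star p u l m Acon" if C: "is_code \<tau> ?S C" for C
  proof -
    have fin: "finite C" using C unfolding is_code_def by auto
    have inS: "\<tau> y z \<in> {a..b}" if "y \<in> C" "z \<in> C" "y \<noteq> z" for y z
      using C that unfolding is_code_def by auto
    define D where "D = Sigma C (\<lambda>y. C - {y})"
    have finD: "finite D" using fin by (simp add: D_def)
    define c where "c = real (card C)"
    define x where "x = xcode \<tau> u l C"
    have sumx: "(\<Sum>i=1..l. x i k) = (\<Sum>q\<in>D. (case_prod \<tau> q) ^ k)" for k
    proof -
      have "(\<Sum>i=1..l. x i k) = (\<Sum>i=1..l. \<Sum>q\<in>D.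
          if case_prod \<tau> q \<in> interval_i u l i then (case_prod \<tau> q) ^ k else 0)"
        unfolding x_def D_def using xcode_alt2[OF fin] by simp
      also have "\<dots> = (\<Sum>q\<in>D. \<Sum>i=1..l.
          if case_prod \<tau> q \<in> interval_i u l i then (case_prod \<tau> q) ^ k else 0)"
        by (rule sum.swap)
      also have "\<dots> = (\<Sum>q\<in>D. (case_prod \<tau> q) ^ k)"
      proof (rule sum.cong[OF refl])
        fix q assume "q \<in> D"
        then have "case_prod \<tau> q \<in> {a..b}" using inS by (auto simp: D_def)
        then show "(\<Sum>i=1..l. if case_prod \<tau> q \<in> interval_i u l i
             then (case_prod \<tau> q) ^ k else 0) = (case_prod \<tau> q) ^ k"
          using part_sum[OF umono l, of "case_prod \<tau> q" "(case_prod \<tau> q) ^ k"] u1 ul by simp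
      qed
      finally show ?thesis .
    qed
    have Dsum: "(\<Sum>q\<in>D. g q) = (\<Sum>y\<in>C. \<Sum>z\<in>C - {y}. g (y, z))" for g :: "'a \<times> 'a \<Rightarrow> real"
      unfolding D_def using fin by (simp add: sum.Sigma)
    have card0: "(\<Sum>q\<in>D. (case_prod \<tau> q) ^ 0) = c * c - c"
    proof -
      have "(\<Sum>q\<in>D. (case_prod \<tau> q) ^ 0) = (\<Sum>y\<in>C. \<Sum>z\<in>C - {y}. (1::real))"
        unfolding power_0 by (rule Dsum)
      also have "\<dots> = (\<Sum>y\<in>C. c - 1)"
      proof (rule sum.cong[OF refl])
        fix y assume "y \<in> C"
        then have "card C \<ge> 1" using fin card_0_eq by fastforce
        then show "(\<Sum>z\<in>C - {y}. (1::real)) = c - 1"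
          using \<open>y \<in> C\<close> fin by (simp add: c_def of_nat_diff)
      qed
      also have "\<dots> = c * c - c" by (simp add: c_def algebra_simps)
      finally show ?thesis .
    qed
    define z where "z = c + (\<Sum>i=1..l. x i 0)"
    have zc: "z = c * c" unfolding z_def using sumx[of 0] card0 by linarith
    have c5: "psd_mat 2 (\<lambda>i j. if i = 0 \<and> j = 0 then 1 else if i = 1 \<and> j = 1 then z else c)"
    proof (rule psd_cong[OF _ psd_rank1[of 1 2 "\<lambda>i. if i = 0 then 1 else c"]])
      fix i j :: nat assume "i < 2" "j < 2"
      then show "(if i = 0 \<and> j = 0 then 1 else if i = 1 \<and> j = 1 then z else c) =
        1 * (if i = 0 then 1 else c) * (if j = 0 then 1 else c)"
        using zc by (auto simp: less_2_cases_iff)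
    qed simp
    have c6: "0 \<le> c + (\<Sum>d=0..k. p k d * (\<Sum>i=1..l. x i d))" for k
    proof -
      obtain h where h: "bij_betw h {0..<card C} C" using ex_bij_betw_nat_finite[OF fin] by blast
      then have "inj_on h {..<card C}" by (simp add: bij_betw_imp_inj_on lessThan_atLeast0)
      then have "psd_mat (card C) (\<lambda>i j. Phi p k (\<tau> (h i) (h j)))" using pd by blast
      then have allv: "\<forall>v::nat \<Rightarrow> real. 0 \<le> (\<Sum>i<card C. \<Sum>j<card C. v i * Phi p k (\<tau> (h i) (h j)) * v j)"
        unfolding psd_mat_def by blast
      have "0 \<le> (\<Sum>i<card C. \<Sum>j<card C. 1 * Phi p k (\<tau> (h i) (h j)) * 1)"
        using spec[OF allv, of "\<lambda>_. 1"] by simp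
      also have "\<dots> = (\<Sum>i\<in>{0..<card C}. \<Sum>j\<in>{0..<card C}. Phi p k (\<tau> (h i) (h j)))"
        by (simp add: lessThan_atLeast0)
      also have "\<dots> = (\<Sum>i\<in>{0..<card C}. \<Sum>w\<in>C. Phi p k (\<tau> (h i) w))"
      proof (rule sum.cong[OF refl])
        fix i
        show "(\<Sum>j\<in>{0..<card C}. Phi p k (\<tau> (h i) (h j))) = (\<Sum>w\<in>C. Phi p k (\<tau> (h i) w))"
          by (rule sum.reindex_bij_betw[OF h, of "\<lambda>w. Phi p k (\<tau> (h i) w)"])
      qed
      also have "\<dots> = (\<Sum>y\<in>C. \<Sum>w\<in>C. Phi p k (\<tau> y w))"
        using sum.reindex_bij_betw[OF h, of "\<lambda>y. \<Sum>w\<in>C. Phi p k (\<tau> y w)"] by simp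
      also have "\<dots> = (\<Sum>y\<in>C. 1 + (\<Sum>w\<in>C - {y}. Phi p k (\<tau> y w)))"
      proof (rule sum.cong[OF refl])
        fix y assume "y \<in> C"
        then show "(\<Sum>w\<in>C. Phi p k (\<tau> y w)) = 1 + (\<Sum>w\<in>C - {y}. Phi p k (\<tau> y w))"
          using fin sum.remove[OF fin \<open>y \<in> C\<close>, of "\<lambda>w. Phi p k (\<tau> y w)"] tau0 norm by simp
      qed
      also have "\<dots> = c + (\<Sum>q\<in>D. Phi p k (case_prod \<tau> q))"
        by (simp add: sum.distrib Dsum c_def)
      also have "(\<Sum>q\<in>D. Phi p k (case_prod \<tau> q)) = (\<Sum>d=0..k. p k d * (\<Sum>i=1..l. x i d))"
      proof -
        have "(\<Sum>q\<in>D. Phi p k (case_prod \<tau> q)) = (\<Sum>q\<in>D. \<Sum>d=0..k. p k d * (case_prod \<tau> q) ^ d)"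
          by (simp add: Phi_def atLeast0AtMost)
        also have "\<dots> = (\<Sum>d=0..k. \<Sum>q\<in>D. p k d * (case_prod \<tau> q) ^ d)"
          by (rule sum.swap)
        also have "\<dots> = (\<Sum>d=0..k. p k d * (\<Sum>i=1..l. x i d))"
          by (simp only: sumx sum_distrib_left)
        finally show ?thesis .
      qed
      finally show ?thesis .
    qed
    have c7: "psd_mat (3 * m) (H_mat m (x i) (u i) (u (Suc i)))" if i: "i \<in> {1..l}" for i
    proof -
      define P where "P = {q \<in> D. case_prod \<tau> q \<in> interval_i u l i}"
      have finP: "finite P" using finD by (simp add: P_def)
      have xi: "x i = (\<lambda>k. \<Sum>q\<in>P. (\<lambda>q k. (case_prod \<tau> q) ^ k) q k)"
        unfolding x_def P_def D_def using xcode_alt[OF fin] by (intro ext) simp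
      have "psd_mat (3 * m) (\<lambda>i' j'. \<Sum>q\<in>P. H_mat m (\<lambda>k. (case_prod \<tau> q) ^ k) (u i) (u (Suc i)) i' j')"
      proof (rule psd_sum[OF finP])
        fix q assume "q \<in> P"
        then have "case_prod \<tau> q \<in> {u i..u (Suc i)}"
          using interval_sub[OF i, of u] by (auto simp: P_def)
        then show "psd_mat (3 * m) (H_mat m (\<lambda>k. (case_prod \<tau> q) ^ k) (u i) (u (Suc i)))"
          by (intro H_single) auto
      qed
      then show ?thesis unfolding xi H_lin by simp
    qed
    have c8: "Acon c (restr_tuple l m x)" using Acodes C unfolding c_def x_def by blast
    have "feasible p u l m Acon c z x"
      unfolding feasible_def using c5 c6 c7 c8 z_def by auto
    then have "ereal c \<in> {ereal c | c. \<exists>z x. feasible p u l m Acon c z x}" by blast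
    then show ?thesis unfolding c_star_def c_def by (rule Sup_upper)
  qed
  show ?thesis unfolding A_code_def
    by (rule Sup_least) (use key in blast)
qed

end
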